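(* Let $n>2$ be an integer, $A$ an abelian group (written additively) of order $n$, and $\alpha\in A$ an element of order greater than $2$. Let $G=\{1,u,v,w\}$ be the Klein four-group with neutral element $1$. Define $\mu:G\times G\to A$ by $\mu(x,y)=\alpha$ if $(x,y)\in\{(v,w),(w,u),(w,w)\}$, $\mu(v,u)=-\alpha$, and $\mu(x,y)=0$ otherwise. Then $(G,A,\mu)$ is a non-flexible (hence nonassociative), noncommutative C-loop whose nucleus is $N=\{(1,a): a\in A\}$.
   Context: For a group $G$ and abelian group $A$, a factor set is a map $\mu:G\times G\to A$ with $\mu(1,g)=\mu(g,1)=0$; $(G,A,\mu)$ denotes $G\times A$ with multiplication $(g,a)(h,b)=(gh,\,a+b+\mu(g,h))$. A C-loop is a loop satisfying $x(y(yz))=((xy)y)z$. A loop is flexible if $(xy)x=x(yx)$ for all $x,y$. The nucleus is the set of elements $a$ with $a(yz)=(ay)z$, $y(az)=(ya)z$, $y(za)=(yz)a$ for all $y,z$. *)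

theory Defs
  imports Main
begin

definition add_order :: "'a::ab_group_add \<Rightarrow> nat" where
  "add_order a = (if \<exists>k>0. ((+) a ^^ k) 0 = 0 then (LEAST k. 0 < k \<and> ((+) a ^^ k) 0 = 0) else 0)"

datatype K4 = K1 | Ku | Kv | Kw

fun k4_mult :: "K4 \<Rightarrow> K4 \<Rightarrow> K4" where
  "k4_mult K1 y = y"
| "k4_mult x K1 = x"
| "k4_mult Ku Ku = K1" | "k4_mult Kv Kv = K1" | "k4_mult Kw Kw = K1"
| "k4_mult Ku Kv = Kw" | "k4_mult Kv Ku = Kw"
| "k4_mult Ku Kw = Kv" | "k4_mult Kw Ku = Kv"
| "k4_mult Kv Kw = Ku" | "k4_mult Kw Kv = Ku"

definition factor_set :: "'g \<Rightarrow> ('g \<Rightarrow> 'g \<Rightarrow> 'a::ab_group_add) \<Rightarrow> bool" where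
  "factor_set e \<mu> \<longleftrightarrow> (\<forall>g. \<mu> e g = 0 \<and> \<mu> g e = 0)"

definition ext_mult :: "('g \<Rightarrow> 'g \<Rightarrow> 'g) \<Rightarrow> ('g \<Rightarrow> 'g \<Rightarrow> 'a::ab_group_add)
    \<Rightarrow> 'g \<times> 'a \<Rightarrow> 'g \<times> 'a \<Rightarrow> 'g \<times> 'a" where
  "ext_mult m \<mu> x y = (m (fst x) (fst y), snd x + snd y + \<mu> (fst x) (fst y))"

definition is_loop :: "('l \<Rightarrow> 'l \<Rightarrow> 'l) \<Rightarrow> bool" where
  "is_loop m \<longleftrightarrow> (\<exists>e. \<forall>x. m e x = x \<and> m x e = x)
     \<and> (\<forall>a b. \<exists>!x. m a x = b) \<and> (\<forall>a b. \<exists>!y. m y a = b)"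

definition c_loop :: "('l \<Rightarrow> 'l \<Rightarrow> 'l) \<Rightarrow> bool" where
  "c_loop m \<longleftrightarrow> is_loop m \<and> (\<forall>x y z. m x (m y (m y z)) = m (m (m x y) y) z)"

definition flexible :: "('l \<Rightarrow> 'l \<Rightarrow> 'l) \<Rightarrow> bool" where
  "flexible m \<longleftrightarrow> (\<forall>x y. m (m x y) x = m x (m y x))"

definition associative_op :: "('l \<Rightarrow> 'l \<Rightarrow> 'l) \<Rightarrow> bool" where
  "associative_op m \<longleftrightarrow> (\<forall>x y z. m x (m y z) = m (m x y) z)"

definition commutative_op :: "('l \<Rightarrow> 'l \<Rightarrow> 'l) \<Rightarrow> bool" where
  "commutative_op m \<longleftrightarrow> (\<forall>x y. m x y = m y x)"

definition nucleus :: "('l \<Rightarrow> 'l \<Rightarrow> 'l) \<Rightarrow> 'l set" where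
  "nucleus m = {a. \<forall>y z. m a (m y z) = m (m a y) z \<and> m y (m a z) = m (m y a) z
                        \<and> m y (m z a) = m (m y z) a}"

end

theory Submission
  imports Defs
begin

lemma add_order_facts:
  fixes \<alpha> :: "'a::ab_group_add"
  assumes "add_order \<alpha> > 2"
  shows "\<alpha> \<noteq> 0" "\<alpha> + \<alpha> \<noteq> 0"
proof -
  have ex: "\<exists>k>0. ((+) \<alpha> ^^ k) 0 = 0" using assms unfolding add_order_def
    by (auto split: if_splits)
  have ord: "add_order \<alpha> = (LEAST k. 0 < k \<and> ((+) \<alpha> ^^ k) 0 = 0)"
    using ex unfolding add_order_def by simp
  show "\<alpha> \<noteq> 0"
  proof
    assume "\<alpha> = 0"
    then have "((+) \<alpha> ^^ 1) 0 = 0" by simp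
    then have "add_order \<alpha> \<le> 1" unfolding ord by (intro Least_le) simp
    with assms show False by simp
  qed
  show "\<alpha> + \<alpha> \<noteq> 0"
  proof
    assume "\<alpha> + \<alpha> = 0"
    then have "((+) \<alpha> ^^ 2) 0 = 0" by (simp add: numeral_2_eq_2)
    then have "add_order \<alpha> \<le> 2" unfolding ord by (intro Least_le) simp
    with assms show False by simp
  qed
qed

lemma k4_sq[simp]: "k4_mult y y = K1" by (cases y) auto
lemma k4_assoc: "k4_mult x (k4_mult y z) = k4_mult (k4_mult x y) z"
  by (cases x; cases y; cases z) auto
lemma k4_cancl: "k4_mult x (k4_mult x y) = y" by (cases x; cases y) auto
lemma k4_cancr: "k4_mult (k4_mult y x) x = y" by (cases x; cases y) auto
lemma k4_unit[simp]: "k4_mult x K1 = x" by (cases x) auto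

theorem proposition3p3:
  fixes n :: nat and \<alpha> :: "'a::{ab_group_add, finite}" and \<mu> :: "K4 \<Rightarrow> K4 \<Rightarrow> 'a"
  assumes "n > 2"
    and "card (UNIV :: 'a set) = n"
    and "add_order \<alpha> > 2"
    and "\<And>x y. \<mu> x y = (if (x, y) \<in> {(Kv, Kw), (Kw, Ku), (Kw, Kw)} then \<alpha>
                         else if (x, y) = (Kv, Ku) then - \<alpha> else 0)"
  shows "factor_set K1 \<mu>
    \<and> c_loop (ext_mult k4_mult \<mu>)
    \<and> \<not> flexible (ext_mult k4_mult \<mu>)
    \<and> \<not> associative_op (ext_mult k4_mult \<mu>)
    \<and> \<not> commutative_op (ext_mult k4_mult \<mu>)
    \<and> nucleus (ext_mult k4_mult \<mu>) = {(K1, a) | a. True}"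
proof -
  note a0 = add_order_facts[OF assms(3)]
  note mu = assms(4)
  let ?m = "ext_mult k4_mult \<mu>"
  have mu1[simp]: "\<mu> K1 g = 0" "\<mu> g K1 = 0" for g using mu by (cases g; simp)+
  have fs: "factor_set K1 \<mu>" unfolding factor_set_def by simp
  have key: "\<mu> y z + \<mu> y (k4_mult y z) = \<mu> x y + \<mu> (k4_mult x y) y" for x y z
    by (cases x; cases y; cases z; simp add: mu)
  have loop: "is_loop ?m"
    unfolding is_loop_def
  proof (intro conjI allI)
    show "\<exists>e. \<forall>x. ?m e x = x \<and> ?m x e = x"
      by (rule exI[of _ "(K1, 0)"]) (simp add: ext_mult_def)
  next
    fix a b :: "K4 \<times> 'a"
    show "\<exists>!x. ?m a x = b"
    proof
      let ?g = "k4_mult (fst a) (fst b)"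
      show "?m a (?g, snd b - snd a - \<mu> (fst a) ?g) = b"
        by (simp add: ext_mult_def k4_assoc prod_eq_iff)
      fix x assume "?m a x = b"
      then have 1: "k4_mult (fst a) (fst x) = fst b" and 2: "snd a + snd x + \<mu> (fst a) (fst x) = snd b"
        by (auto simp: ext_mult_def prod_eq_iff)
      from 1 have 3: "fst x = ?g" using k4_cancl by metis
      from 2 3 show "x = (?g, snd b - snd a - \<mu> (fst a) ?g)"
        by (auto simp: prod_eq_iff algebra_simps)
    qed
  next
    fix a b :: "K4 \<times> 'a"
    show "\<exists>!y. ?m y a = b"
    proof
      let ?g = "k4_mult (fst b) (fst a)"
      show "?m (?g, snd b - snd a - \<mu> ?g (fst a)) a = b"
        by (simp add: ext_mult_def k4_assoc[symmetric] prod_eq_iff)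
      fix x assume "?m x a = b"
      then have 1: "k4_mult (fst x) (fst a) = fst b" and 2: "snd x + snd a + \<mu> (fst x) (fst a) = snd b"
        by (auto simp: ext_mult_def prod_eq_iff)
      from 1 have 3: "fst x = ?g" using k4_cancr by metis
      from 2 3 show "x = (?g, snd b - snd a - \<mu> ?g (fst a))"
        by (auto simp: prod_eq_iff algebra_simps)
    qed
  qed
  have cl: "c_loop ?m"
    unfolding c_loop_def
  proof (intro conjI loop allI)
    fix x y z :: "K4 \<times> 'a"
    have "\<mu> (fst y) (fst z) + \<mu> (fst y) (k4_mult (fst y) (fst z)) =
          \<mu> (fst x) (fst y) + \<mu> (k4_mult (fst x) (fst y)) (fst y)" by (rule key)
    then show "?m x (?m y (?m y z)) = ?m (?m (?m x y) y) z"
      by (simp add: ext_mult_def k4_cancl k4_cancr prod_eq_iff algebra_simps)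
  qed
  have nf: "\<not> flexible ?m"
  proof
    assume "flexible ?m"
    then have "?m (?m (Kv,0) (Ku,0)) (Kv,0) = ?m (Kv,0) (?m (Ku,0) (Kv,0))"
      unfolding flexible_def by blast
    then have "- \<alpha> = \<alpha>" by (simp add: ext_mult_def mu)
    then have "\<alpha> + \<alpha> = 0" by (metis add.right_inverse)
    with a0 show False by simp
  qed
  have na: "\<not> associative_op ?m"
    using nf unfolding associative_op_def flexible_def by metis
  have nc: "\<not> commutative_op ?m"
  proof
    assume "commutative_op ?m"
    then have "?m (Kv,0) (Ku,0) = ?m (Ku,0) (Kv,0)"
      unfolding commutative_op_def by blast
    then have "- \<alpha> = 0" by (simp add: ext_mult_def mu)
    with a0 show False by simp
  qed
  have nuc: "nucleus ?m = {(K1, a) | a. True}"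
  proof (intro equalityI subsetI)
    fix x assume x: "x \<in> nucleus ?m"
    obtain g a where xe: "x = (g, a)" by (cases x)
    have L: "?m x (?m y z) = ?m (?m x y) z" for y z using x unfolding nucleus_def by blast
    have "g = K1"
    proof (cases g)
      case Ku
      from L[of "(Kv,0)" "(Ku,0)"] have "\<alpha> + \<alpha> = 0"
        by (simp add: xe Ku ext_mult_def mu algebra_simps)
      with a0 show ?thesis by simp
    next
      case Kv
      from L[of "(Ku,0)" "(Kv,0)"] have "\<alpha> + \<alpha> = 0"
        by (simp add: xe Kv ext_mult_def mu algebra_simps)
      with a0 show ?thesis by simp
    next
      case Kw
      from L[of "(Ku,0)" "(Kw,0)"] have "\<alpha> + \<alpha> = 0"
        by (simp add: xe Kw ext_mult_def mu algebra_simps)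
      with a0 show ?thesis by simp
    qed simp
    then show "x \<in> {(K1, a) | a. True}" using xe by simp
  next
    fix x assume "x \<in> {(K1, a) | a :: 'a. True}"
    then obtain a where xe: "x = (K1, a)" by blast
    show "x \<in> nucleus ?m"
      unfolding nucleus_def xe
      by (simp add: ext_mult_def algebra_simps)
  qed
  show ?thesis using fs cl nf na nc nuc by blast
qed

end
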